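(* Let $f$ be a PSR with core test sets $\{\mathcal{U}_h\}_{h\in[H]}$ such that every $o\in\mathcal{O}$ (as a length-one test) belongs to $\mathcal{U}_H$, with parameters $\{M_{o,a,h;f},q_{0;f}\}$ and $m_{o,H;f}=e_{o}$ (the standard basis vector of $\mathbb{R}^{|\mathcal{U}_H|}$ indexing $o$). Define new parameters $\{M_{o,a,h;f'},q_{0;f}\}$ by letting, for all $o\in\mathcal{O},a\in\mathcal{A},h\in[H-1],u\in\mathcal{U}_{h+1}$, the row $m_{(o,a,u),h;f'}$ be the orthogonal projection of $m_{(o,a,u),h;f}$ onto the column space of $K_{h-1;f}$, and set $\mathbb{P}^\pi_{f'}(\tau_H):=e_{o_H}^\top M_{o_{H-1},a_{H-1},H-1;f'}\cdots M_{o_1,a_1,1;f'}q_{0;f}\,\pi(\tau_H)$. Then $\mathbb{P}^\pi_f(\tau_H)=\mathbb{P}^\pi_{f'}(\tau_H)$ for every trajectory $\tau_H$ and every policy $\pi$.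
   Context: Process (model $f$) with finite $\mathcal{O},\mathcal{A}$, horizon $H$; histories $\tau_h=(o_1,a_1,\dots,o_h,a_h)$; a policy $\pi$ picks $a_h\sim\pi_h(\cdot\mid\tau_{h-1},o_h)$, $\pi(\tau_h)=\prod_{l\le h}\pi_l(a_l\mid\tau_{l-1},o_l)$, $\mathbb{P}^\pi_f(\tau_h)$ is the probability of $\tau_h$ under $\pi$ in $f$. A test starting at step $h$ is $t=(o_h,\dots,o_{h+W-1},a_h,\dots,a_{h+W-2})$; $\mathbb{P}_f(t\mid\tau_{h-1})$ is the probability of observing $o_{h:h+W-1}$ when executing $a_{h:h+W-2}$ after $\tau_{h-1}$ ($0$ if unreachable). A set $\mathcal{U}_h$ of tests starting at $h$ is a core test set if for every test $t$ starting at $h$ there is a history-independent $m_{t,h;f}$ with $\mathbb{P}_f(t\mid\tau_{h-1})=\langle m_{t,h;f},q_{\tau_{h-1};f}\rangle$, $q_{\tau_{h-1};f}=[\mathbb{P}_f(u\mid\tau_{h-1})]_{u\in\mathcal{U}_h}$; $q_{0;f}=[\mathbb{P}_f(u)]_{u\in\mathcal{U}_1}$; $M_{o,a,h;f}$ has rows $m_{(o,a,u),h;f}^\top$, $u\in\mathcal{U}_{h+1}$. Let $d_{\mathrm{PSR},h}$ be the rank of the matrix with entries $\mathbb{P}_f(t\mid\tau_h)$ (rows: tests starting at $h+1$; columns: histories $\tau_h$). Core matrix: for $h\ge1$, $K_{h;f}$ has columns $q_{\tau_h^1;f},\dots,q_{\tau_h^{d_{\mathrm{PSR},h}};f}$ for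 histories whose predictive states span all $q_{\tau_h;f}$ (chosen to minimize $\|K_{h;f}^\dagger\|_{1\to1}$); $K_{0;f}=q_{0;f}$. *)

theory Defs
  imports "HOL-Analysis.Analysis"
begin

text \<open>The process (model f) is given by its observation
  kernel: obs tau ob = probability of observing ob at step (length tau + 1) after tau.
  A test is a pair (observations o_h..o_{h+W-1}, actions a_h..a_{h+W-2}).\<close>

type_synonym ('ob,'a) hist = "('ob \<times> 'a) list"
type_synonym ('ob,'a) test = "'ob list \<times> 'a list"

definition valid_process :: "nat \<Rightarrow> (('ob::finite,'a::finite) hist \<Rightarrow> 'ob \<Rightarrow> real) \<Rightarrow> bool" where
  "valid_process H obs \<longleftrightarrow>
     (\<forall>\<tau> ob. length \<tau> < H \<longrightarrow> obs \<tau> ob \<ge> 0) \<and>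
     (\<forall>\<tau>. length \<tau> < H \<longrightarrow> (\<Sum>ob\<in>UNIV. obs \<tau> ob) = 1)"

definition valid_policy :: "nat \<Rightarrow> (('ob::finite,'a::finite) hist \<Rightarrow> 'ob \<Rightarrow> 'a \<Rightarrow> real) \<Rightarrow> bool" where
  "valid_policy H \<pi> \<longleftrightarrow>
     (\<forall>\<tau> ob a. length \<tau> < H \<longrightarrow> \<pi> \<tau> ob a \<ge> 0) \<and>
     (\<forall>\<tau> ob. length \<tau> < H \<longrightarrow> (\<Sum>a\<in>UNIV. \<pi> \<tau> ob a) = 1)"

definition hist_obs_prob :: "(('ob,'a) hist \<Rightarrow> 'ob \<Rightarrow> real) \<Rightarrow> ('ob,'a) hist \<Rightarrow> real" where
  "hist_obs_prob obs \<tau> = (\<Prod>i<length \<tau>. obs (take i \<tau>) (fst (\<tau> ! i)))"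

definition reachable :: "(('ob,'a) hist \<Rightarrow> 'ob \<Rightarrow> real) \<Rightarrow> ('ob,'a) hist \<Rightarrow> bool" where
  "reachable obs \<tau> \<longleftrightarrow> hist_obs_prob obs \<tau> > 0"

text \<open>Test t starting at step h (1-based) within horizon H.\<close>
definition is_test :: "nat \<Rightarrow> nat \<Rightarrow> ('ob,'a) test \<Rightarrow> bool" where
  "is_test H h t \<longleftrightarrow> 1 \<le> h \<and> length (fst t) \<ge> 1 \<and> length (snd t) + 1 = length (fst t)
      \<and> h + length (fst t) - 1 \<le> H"

definition test_prob :: "(('ob,'a) hist \<Rightarrow> 'ob \<Rightarrow> real) \<Rightarrow> ('ob,'a) hist \<Rightarrow> ('ob,'a) test \<Rightarrow> real" where
  "test_prob obs \<tau> t =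
     (if reachable obs \<tau> then
        (\<Prod>i<length (fst t). obs (\<tau> @ zip (take i (fst t)) (take i (snd t))) (fst t ! i))
      else 0)"

definition traj_prob :: "(('ob,'a) hist \<Rightarrow> 'ob \<Rightarrow> real) \<Rightarrow> (('ob,'a) hist \<Rightarrow> 'ob \<Rightarrow> 'a \<Rightarrow> real)
    \<Rightarrow> ('ob,'a) hist \<Rightarrow> real" where
  "traj_prob obs \<pi> \<tau> = (\<Prod>i<length \<tau>. obs (take i \<tau>) (fst (\<tau> ! i)) * \<pi> (take i \<tau>) (fst (\<tau> ! i)) (snd (\<tau> ! i)))"

definition policy_prob :: "(('ob,'a) hist \<Rightarrow> 'ob \<Rightarrow> 'a \<Rightarrow> real) \<Rightarrow> ('ob,'a) hist \<Rightarrow> real" where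
  "policy_prob \<pi> \<tau> = (\<Prod>i<length \<tau>. \<pi> (take i \<tau>) (fst (\<tau> ! i)) (snd (\<tau> ! i)))"

text \<open>Predictive state q_{tau_h} in R^{U_{h+1}} (vectors in R^U are functions that vanish off U).\<close>
definition pred_state :: "(nat \<Rightarrow> ('ob,'a) test set) \<Rightarrow> (('ob,'a) hist \<Rightarrow> 'ob \<Rightarrow> real)
    \<Rightarrow> ('ob,'a) hist \<Rightarrow> ('ob,'a) test \<Rightarrow> real" where
  "pred_state U obs \<tau> = (\<lambda>u. if u \<in> U (length \<tau> + 1) then test_prob obs \<tau> u else 0)"

definition q0 :: "(nat \<Rightarrow> ('ob,'a) test set) \<Rightarrow> (('ob,'a) hist \<Rightarrow> 'ob \<Rightarrow> real) \<Rightarrow> ('ob,'a) test \<Rightarrow> real" where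
  "q0 U obs = pred_state U obs []"

text \<open>Column space of the core matrix K_{h;f}: for h >= 1 the span of the predictive states
  q_{tau_h} over all histories tau_h (the columns of K_{h;f} are predictive states spanning all
  q_{tau_h}); for h = 0, K_{0;f} = q_{0;f}.\<close>
definition core_colspace :: "(nat \<Rightarrow> ('ob::finite,'a::finite) test set) \<Rightarrow> (('ob,'a) hist \<Rightarrow> 'ob \<Rightarrow> real)
    \<Rightarrow> nat \<Rightarrow> (('ob,'a) test \<Rightarrow> real) set" where
  "core_colspace U obs h =
     (if h = 0 then {(\<lambda>u. c * q0 U obs u) | c. True}
      else {(\<lambda>u. \<Sum>\<tau>\<in>{\<tau>::('ob,'a) hist. length \<tau> = h}. c \<tau> * pred_state U obs \<tau> u) | c. True})"

definition inner_on :: "('t set) \<Rightarrow> ('t \<Rightarrow> real) \<Rightarrow> ('t \<Rightarrow> real) \<Rightarrow> real" where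
  "inner_on U x y = (\<Sum>w\<in>U. x w * y w)"

definition orth_proj :: "('t set) \<Rightarrow> ('t \<Rightarrow> real) set \<Rightarrow> ('t \<Rightarrow> real) \<Rightarrow> ('t \<Rightarrow> real)" where
  "orth_proj U S x = (THE p. p \<in> S \<and> (\<forall>y\<in>S. inner_on U (\<lambda>w. x w - p w) y = 0))"

definition ext_test :: "'ob \<Rightarrow> 'a \<Rightarrow> ('ob,'a) test \<Rightarrow> ('ob,'a) test" where
  "ext_test ob a u = (ob # fst u, a # snd u)"

text \<open>Applying M_{ob,a,h} (rows m_{(ob,a,u),h}, u in U_{h+1}) to a vector in R^{U_h}.\<close>
definition apply_M :: "(nat \<Rightarrow> ('ob,'a) test set) \<Rightarrow> (('ob,'a) test \<Rightarrow> nat \<Rightarrow> ('ob,'a) test \<Rightarrow> real)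
    \<Rightarrow> 'ob \<Rightarrow> 'a \<Rightarrow> nat \<Rightarrow> (('ob,'a) test \<Rightarrow> real) \<Rightarrow> ('ob,'a) test \<Rightarrow> real" where
  "apply_M U m ob a h v = (\<lambda>u. if u \<in> U (h+1) then (\<Sum>w\<in>U h. m (ext_test ob a u) h w * v w) else 0)"

fun prop_state :: "(nat \<Rightarrow> ('ob,'a) test set) \<Rightarrow> (('ob,'a) test \<Rightarrow> nat \<Rightarrow> ('ob,'a) test \<Rightarrow> real)
    \<Rightarrow> (('ob,'a) test \<Rightarrow> real) \<Rightarrow> ('ob,'a) hist \<Rightarrow> nat \<Rightarrow> ('ob,'a) test \<Rightarrow> real" where
  "prop_state U m q \<tau> 0 = q"
| "prop_state U m q \<tau> (Suc l) =
     apply_M U m (fst (\<tau> ! l)) (snd (\<tau> ! l)) (Suc l) (prop_state U m q \<tau> l)"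

definition param_traj_prob :: "nat \<Rightarrow> (nat \<Rightarrow> ('ob,'a) test set) \<Rightarrow> (('ob,'a) test \<Rightarrow> nat \<Rightarrow> ('ob,'a) test \<Rightarrow> real)
    \<Rightarrow> (('ob,'a) test \<Rightarrow> real) \<Rightarrow> (('ob,'a) hist \<Rightarrow> 'ob \<Rightarrow> 'a \<Rightarrow> real) \<Rightarrow> ('ob,'a) hist \<Rightarrow> real" where
  "param_traj_prob H U m q \<pi> \<tau> =
     prop_state U m q \<tau> (H - 1) ([fst (\<tau> ! (H - 1))], []) * policy_prob \<pi> \<tau>"

definition is_PSR :: "nat \<Rightarrow> (('ob::finite,'a::finite) hist \<Rightarrow> 'ob \<Rightarrow> real) \<Rightarrow> (nat \<Rightarrow> ('ob,'a) test set)
    \<Rightarrow> (('ob,'a) test \<Rightarrow> nat \<Rightarrow> ('ob,'a) test \<Rightarrow> real) \<Rightarrow> bool" where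
  "is_PSR H obs U m \<longleftrightarrow> valid_process H obs \<and>
     (\<forall>h\<in>{1..H}. finite (U h) \<and> (\<forall>u\<in>U h. is_test H h u) \<and>
        (\<forall>t. is_test H h t \<longrightarrow>
           (\<forall>\<tau>::('ob,'a) hist. length \<tau> = h - 1 \<longrightarrow>
              test_prob obs \<tau> t = (\<Sum>u\<in>U h. m t h u * test_prob obs \<tau> u))))"

end

theory Submission imports Defs begin

lemma ip_diff_left: "inner_on U (\<lambda>w. x w - y w) z = inner_on U x z - inner_on U y z"
  unfolding inner_on_def by (simp add: left_diff_distrib sum_subtractf)

lemma ip_scale_left: "inner_on U (\<lambda>w. a * x w) z = a * inner_on U x z"
  unfolding inner_on_def by (simp add: sum_distrib_left mult.assoc)

lemma ip_add_right: "inner_on U x (\<lambda>w. y w + z w) = inner_on U x y + inner_on U x z"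
  unfolding inner_on_def by (simp add: distrib_left sum.distrib)

lemma ip_sum_right: "inner_on U x (\<lambda>w. \<Sum>j\<in>I. d j * g j w) = (\<Sum>j\<in>I. d j * inner_on U x (g j))"
  unfolding inner_on_def by (simp add: sum_distrib_left sum_distrib_right sum.swap[of _ U] mult_ac)

lemma ip_sum_left: "inner_on U (\<lambda>w. \<Sum>j\<in>I. d j * g j w) x = (\<Sum>j\<in>I. d j * inner_on U (g j) x)"
  unfolding inner_on_def by (simp add: sum_distrib_left sum_distrib_right sum.swap[of _ U] mult_ac)

lemma ip_comm: "inner_on U x y = inner_on U y x"
  unfolding inner_on_def by (simp add: mult.commute)

lemma ip_self_zero:
  assumes "finite U" "inner_on U r r = 0" "w \<in> U" shows "r w = 0"
proof -
  have "\<forall>v\<in>U. r v * r v = 0"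
    using assms(2) unfolding inner_on_def
    by (subst sum_nonneg_eq_0_iff[symmetric]) (auto simp: assms(1))
  then show ?thesis using assms(3) by auto
qed

lemma ip_zero_left:
  assumes "finite U" "inner_on U r r = 0" shows "inner_on U r y = 0"
  unfolding inner_on_def using ip_self_zero[OF assms] by simp

lemma proj_ex:
  assumes U: "finite U" and I: "finite I"
  shows "\<exists>c. \<forall>i\<in>I. inner_on U (\<lambda>w. x w - (\<Sum>j\<in>I. c j * g j w)) (g i) = 0"
  using I
proof (induction I arbitrary: x rule: finite_induct)
  case empty then show ?case by simp
next
  case (insert k I)
  obtain c where c: "\<forall>i\<in>I. inner_on U (\<lambda>w. x w - (\<Sum>j\<in>I. c j * g j w)) (g i) = 0"
    using insert.IH by blast
  obtain d where d: "\<forall>i\<in>I. inner_on U (\<lambda>w. g k w - (\<Sum>j\<in>I. d j * g j w)) (g i) = 0"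
    using insert.IH by blast
  define r where "r = (\<lambda>w. g k w - (\<Sum>j\<in>I. d j * g j w))"
  define p where "p = (\<lambda>w. \<Sum>j\<in>I. c j * g j w)"
  have gk: "g k = (\<lambda>w. r w + (\<Sum>j\<in>I. d j * g j w))" unfolding r_def by auto
  have ei: "\<forall>i\<in>I. inner_on U (\<lambda>w. x w - p w) (g i) = 0" using c p_def by simp
  have ri: "\<forall>i\<in>I. inner_on U r (g i) = 0" using d r_def by simp
  show ?case
  proof (cases "inner_on U r r = 0")
    case True
    define c' where "c' = c(k:=0)"
    have s: "(\<Sum>j\<in>insert k I. c' j * g j w) = p w" for w
      using insert.hyps unfolding c'_def p_def by (simp add: sum.insert, intro sum.cong) auto
    have "inner_on U (\<lambda>w. x w - p w) (g k) = 0"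
      apply (subst gk)
      apply (simp add: ip_add_right ip_sum_right ei)
      apply (subst ip_comm) using ip_zero_left[OF U True] by simp
    then show ?thesis using ei s by (intro exI[of _ c']) auto
  next
    case False
    define \<alpha> where "\<alpha> = inner_on U (\<lambda>w. x w - p w) r / inner_on U r r"
    define c' where "c' = (\<lambda>j. c j - \<alpha> * d j)(k := \<alpha>)"
    have s: "(\<Sum>j\<in>insert k I. c' j * g j w) = p w + \<alpha> * r w" for w
    proof -
      have "(\<Sum>j\<in>insert k I. c' j * g j w) = \<alpha> * g k w + (\<Sum>j\<in>I. (c j - \<alpha> * d j) * g j w)"
        using insert.hyps unfolding c'_def by (simp add: sum.insert, intro sum.cong) auto
      also have "\<dots> = p w + \<alpha> * r w"
        unfolding p_def r_def by (simp add: left_diff_distrib sum_subtractf right_diff_distrib sum_distrib_left mult.assoc)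
      finally show ?thesis .
    qed
    have e2: "(\<lambda>w. x w - (\<Sum>j\<in>insert k I. c' j * g j w)) = (\<lambda>w. (x w - p w) - \<alpha> * r w)"
      using s by (auto simp: algebra_simps)
    have eI: "\<forall>i\<in>I. inner_on U (\<lambda>w. (x w - p w) - \<alpha> * r w) (g i) = 0"
      using ei ri by (simp add: ip_diff_left ip_scale_left)
    have er: "inner_on U (\<lambda>w. (x w - p w) - \<alpha> * r w) r = 0"
    proof -
      have "inner_on U (\<lambda>w. (x w - p w) - \<alpha> * r w) r = inner_on U (\<lambda>w. x w - p w) r - \<alpha> * inner_on U r r"
        using ip_diff_left[of U "\<lambda>w. x w - p w" "\<lambda>w. \<alpha> * r w" r] ip_scale_left[of U \<alpha> r r] by simp
      then show ?thesis using False by (simp add: \<alpha>_def)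
    qed
    have "inner_on U (\<lambda>w. (x w - p w) - \<alpha> * r w) (g k) = 0"
      apply (subst gk)
      using eI er by (simp add: ip_add_right ip_sum_right)
    then show ?thesis using eI e2 by (intro exI[of _ c']) auto
  qed
qed

lemma orth_proj_prop:
  assumes U: "finite U" and I: "finite I" and van: "\<forall>i\<in>I. \<forall>w. w \<notin> U \<longrightarrow> g i w = 0"
    and S: "S = {(\<lambda>u. \<Sum>i\<in>I. c i * g i u) | c. True}"
  shows "orth_proj U S x \<in> S \<and> (\<forall>y\<in>S. inner_on U (\<lambda>w. x w - orth_proj U S x w) y = 0)"
proof -
  have orthS: "\<forall>y\<in>S. inner_on U e y = 0" if "\<forall>i\<in>I. inner_on U e (g i) = 0" for e
    using that unfolding S by (auto simp: ip_sum_right)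
  obtain c where c: "\<forall>i\<in>I. inner_on U (\<lambda>w. x w - (\<Sum>j\<in>I. c j * g j w)) (g i) = 0"
    using proj_ex[OF U I] by blast
  have ex: "\<exists>p. p \<in> S \<and> (\<forall>y\<in>S. inner_on U (\<lambda>w. x w - p w) y = 0)"
    apply (rule exI[of _ "\<lambda>w. \<Sum>j\<in>I. c j * g j w"])
    using orthS[OF c] S by auto
  have uniq: "p1 = p2" if h1: "p1 \<in> S \<and> (\<forall>y\<in>S. inner_on U (\<lambda>w. x w - p1 w) y = 0)"
     and h2: "p2 \<in> S \<and> (\<forall>y\<in>S. inner_on U (\<lambda>w. x w - p2 w) y = 0)" for p1 p2
  proof -
    obtain c1 where c1: "p1 = (\<lambda>u. \<Sum>i\<in>I. c1 i * g i u)" using conjunct1[OF h1] unfolding S by blast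
    obtain c2 where c2: "p2 = (\<lambda>u. \<Sum>i\<in>I. c2 i * g i u)" using conjunct1[OF h2] unfolding S by blast
    define q where "q = (\<lambda>u. \<Sum>i\<in>I. (c1 i - c2 i) * g i u)"
    have qS: "q \<in> S" unfolding q_def S by auto
    have qd: "q = (\<lambda>w. (x w - p2 w) - (x w - p1 w))"
      unfolding q_def c1 c2 by (auto simp: left_diff_distrib sum_subtractf)
    have "inner_on U q q = 0"
      apply (subst (1) qd) using h1 h2 qS by (simp add: ip_diff_left)
    then have "\<forall>w\<in>U. q w = 0" using ip_self_zero[OF U] by blast
    then have onU: "\<forall>w\<in>U. p1 w = p2 w" using qd by auto
    have offU: "\<forall>w. w \<notin> U \<longrightarrow> p1 w = 0 \<and> p2 w = 0" using van c1 c2 by auto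
    show ?thesis using onU offU by (metis ext)
  qed
  have "\<exists>!p. p \<in> S \<and> (\<forall>y\<in>S. inner_on U (\<lambda>w. x w - p w) y = 0)"
    using ex uniq by blast
  from theI'[OF this] show ?thesis unfolding orth_proj_def .
qed


lemma hist_append: "hist_obs_prob obs (\<sigma> @ [x]) = hist_obs_prob obs \<sigma> * obs \<sigma> (fst x)"
  unfolding hist_obs_prob_def
  by (simp add: prod.lessThan_Suc nth_append)

lemma hist_nonneg:
  assumes "valid_process H obs" "length \<sigma> \<le> H" shows "hist_obs_prob obs \<sigma> \<ge> 0"
  unfolding hist_obs_prob_def using assms
  by (intro prod_nonneg) (auto simp: valid_process_def)

lemma ext_lemma:
  assumes vp: "valid_process H obs" and l: "length \<sigma> < H"
  shows "hist_obs_prob obs \<sigma> * test_prob obs \<sigma> (ext_test ob a u)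
       = hist_obs_prob obs (\<sigma> @ [(ob,a)]) * test_prob obs (\<sigma> @ [(ob,a)]) u"
proof -
  define P where "P = (\<Prod>i<length (fst u). obs ((\<sigma> @ [(ob,a)]) @ zip (take i (fst u)) (take i (snd u))) (fst u ! i))"
  have hn: "hist_obs_prob obs \<sigma> \<ge> 0" using hist_nonneg[OF vp] l by simp
  have on: "obs \<sigma> ob \<ge> 0" using vp l by (simp add: valid_process_def)
  have tp1: "test_prob obs \<sigma> (ext_test ob a u) = (if reachable obs \<sigma> then obs \<sigma> ob * P else 0)"
    unfolding test_prob_def ext_test_def P_def
    by (simp del: prod.lessThan_Suc add: prod.lessThan_Suc_shift)
  have tp2: "test_prob obs (\<sigma> @ [(ob,a)]) u = (if reachable obs (\<sigma> @ [(ob,a)]) then P else 0)"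
    unfolding test_prob_def P_def by simp
  show ?thesis
  proof (cases "reachable obs \<sigma>")
    case True
    then have hp: "hist_obs_prob obs \<sigma> > 0" by (simp add: reachable_def)
    show ?thesis
    proof (cases "obs \<sigma> ob > 0")
      case True
      then show ?thesis using hp tp1 tp2 \<open>reachable obs \<sigma>\<close>
        by (simp add: hist_append reachable_def)
    next
      case False
      then have "obs \<sigma> ob = 0" using on by simp
      then show ?thesis using tp1 tp2 by (simp add: hist_append)
    qed
  next
    case False
    then have "hist_obs_prob obs \<sigma> = 0" using hn by (simp add: reachable_def)
    then show ?thesis using tp1 by (simp add: hist_append)
  qed
qed

lemma finite_len: "finite {\<tau>::('ob::finite,'a::finite) hist. length \<tau> = h}"
  using finite_lists_length_eq[of "UNIV :: ('ob \<times> 'a) set" h] by simp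

lemma colspace0:
  "core_colspace U obs 0 = {(\<lambda>u. \<Sum>i\<in>{()}. c i * (\<lambda>_. q0 U obs) i u) | c. True}"
  unfolding core_colspace_def
  apply auto
  done

lemma colspaceS:
  "h' \<noteq> 0 \<Longrightarrow> core_colspace U obs h' = {(\<lambda>u. \<Sum>i\<in>{\<tau>::('ob::finite,'a::finite) hist. length \<tau> = h'}. c i * pred_state U obs i u) | c. True}"
  unfolding core_colspace_def by simp

lemma proj_sum:
  assumes U: "finite (U (h'+1))" and v: "v \<in> core_colspace U obs h'"
  shows "(\<Sum>w\<in>U (h'+1). orth_proj (U (h'+1)) (core_colspace U obs h') x w * v w)
       = (\<Sum>w\<in>U (h'+1). x w * v w)"
proof -
  have "inner_on (U (h'+1)) (\<lambda>w. x w - orth_proj (U (h'+1)) (core_colspace U obs h') x w) v = 0"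
  proof (cases "h' = 0")
    case True
    have "\<forall>i\<in>{()}. \<forall>w. w \<notin> U (h'+1) \<longrightarrow> (\<lambda>_. q0 U obs) i w = 0"
      using True by (simp add: q0_def pred_state_def)
    from orth_proj_prop[OF U _ this colspace0[of U obs, folded True]] v show ?thesis
      by blast
  next
    case False
    have "\<forall>i\<in>{\<tau>::('a,'b) hist. length \<tau> = h'}. \<forall>w. w \<notin> U (h'+1) \<longrightarrow> pred_state U obs i w = 0"
      by (simp add: pred_state_def)
    from orth_proj_prop[OF U finite_len this colspaceS[OF False]] v show ?thesis
      by blast
  qed
  then show ?thesis unfolding inner_on_def
    by (simp add: left_diff_distrib sum_subtractf)
qed


theorem lemma6:
  fixes H :: nat
    and obs :: "('ob::finite,'a::finite) hist \<Rightarrow> 'ob \<Rightarrow> real"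
    and U :: "nat \<Rightarrow> ('ob,'a) test set"
    and m :: "('ob,'a) test \<Rightarrow> nat \<Rightarrow> ('ob,'a) test \<Rightarrow> real"
    and \<pi> :: "('ob,'a) hist \<Rightarrow> 'ob \<Rightarrow> 'a \<Rightarrow> real"
    and \<tau> :: "('ob,'a) hist"
  assumes H: "H \<ge> 1"
    and psr: "is_PSR H obs U m"
    and obsU: "\<forall>ob. ([ob], []) \<in> U H"
    and mH: "\<forall>ob. m ([ob], []) H = (\<lambda>w. if w = ([ob], []) then 1 else 0)"
    and m'_def: "\<forall>ob a h u. h \<in> {1..H-1} \<longrightarrow> u \<in> U (h+1) \<longrightarrow>
        m' (ext_test ob a u) h = orth_proj (U h) (core_colspace U obs (h-1)) (m (ext_test ob a u) h)"
    and pol: "valid_policy H \<pi>"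
    and len: "length \<tau> = H"
  shows "traj_prob obs \<pi> \<tau> = param_traj_prob H U m' (q0 U obs) \<pi> \<tau>"
proof -
  have vp: "valid_process H obs" using psr by (simp add: is_PSR_def)
  have claim: "l \<le> H - 1 \<Longrightarrow> prop_state U m' (q0 U obs) \<tau> l
      = (\<lambda>u. hist_obs_prob obs (take l \<tau>) * pred_state U obs (take l \<tau>) u)" for l
  proof (induction l)
    case 0
    then show ?case by (simp add: q0_def hist_obs_prob_def)
  next
    case (Suc l)
    define \<sigma> where "\<sigma> = take l \<tau>"
    define x where "x = \<tau> ! l"
    have lH: "Suc l < H" using Suc.prems H by linarith
    have tS: "take (Suc l) \<tau> = \<sigma> @ [x]" unfolding \<sigma>_def x_def
      using lH len by (simp add: take_Suc_conv_app_nth)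
    have ls: "length \<sigma> = l" unfolding \<sigma>_def using lH len by simp
    define v where "v = (\<lambda>u. hist_obs_prob obs \<sigma> * pred_state U obs \<sigma> u)"
    have IH: "prop_state U m' (q0 U obs) \<tau> l = v"
      using Suc by (simp add: v_def \<sigma>_def)
    have vS: "v \<in> core_colspace U obs l"
    proof (cases "l = 0")
      case True
      then have "\<sigma> = []" using ls by simp
      then show ?thesis using True unfolding core_colspace_def v_def
        by (auto simp: q0_def hist_obs_prob_def intro!: exI[of _ 1])
    next
      case False
      have veq: "v = (\<lambda>u. \<Sum>\<tau>'\<in>{\<tau>'::('ob,'a) hist. length \<tau>' = l}.
                 (if \<tau>' = \<sigma> then hist_obs_prob obs \<sigma> else 0) * pred_state U obs \<tau>' u)"
        unfolding v_def using ls finite_len[where 'ob='ob and 'a='a and h=l]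
        by (simp add: if_distrib[of "\<lambda>z. z * _"] sum.delta' cong: if_cong)
      have "v \<in> {(\<lambda>u. \<Sum>i\<in>{\<tau>'::('ob,'a) hist. length \<tau>' = l}. c i * pred_state U obs i u) | c. True}"
        by (subst veq) (rule CollectI, rule exI[of _ "\<lambda>\<tau>'. if \<tau>' = \<sigma> then hist_obs_prob obs \<sigma> else 0"], simp)
      then show ?thesis by (simp only: colspaceS[OF False, of U obs])
    qed
    have Uf: "finite (U (l+1))" using psr lH by (simp add: is_PSR_def)
    have "apply_M U m' (fst x) (snd x) (Suc l) v u
        = hist_obs_prob obs (\<sigma> @ [x]) * pred_state U obs (\<sigma> @ [x]) u" for u
    proof (cases "u \<in> U (Suc l + 1)")
      case False
      then show ?thesis using ls by (simp add: apply_M_def pred_state_def)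
    next
      case True
      have m': "m' (ext_test (fst x) (snd x) u) (Suc l)
          = orth_proj (U (l+1)) (core_colspace U obs l) (m (ext_test (fst x) (snd x) u) (Suc l))"
        using m'_def[rule_format, of "Suc l" u "fst x" "snd x"] True lH by simp
      have psr1: "\<forall>h\<in>{1..H}. (\<forall>u\<in>U h. is_test H h u) \<and> (\<forall>t. is_test H h t \<longrightarrow>
           (\<forall>\<tau>::('ob,'a) hist. length \<tau> = h - 1 \<longrightarrow>
              test_prob obs \<tau> t = (\<Sum>u\<in>U h. m t h u * test_prob obs \<tau> u)))"
        using psr by (simp add: is_PSR_def)
      have h2: "Suc l + 1 \<in> {1..H}" using lH by simp
      have h1: "Suc l \<in> {1..H}" using lH by simp
      have tu: "is_test H (Suc l + 1) u" using conjunct1[OF bspec[OF psr1 h2]] True by blast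
      have te: "is_test H (Suc l) (ext_test (fst x) (snd x) u)"
        using tu unfolding is_test_def ext_test_def by auto
      have eq: "test_prob obs \<sigma> (ext_test (fst x) (snd x) u)
          = (\<Sum>w\<in>U (Suc l). m (ext_test (fst x) (snd x) u) (Suc l) w * test_prob obs \<sigma> w)"
        using conjunct2[OF bspec[OF psr1 h1], rule_format, OF te, of \<sigma>] ls by simp
      have "apply_M U m' (fst x) (snd x) (Suc l) v u
          = (\<Sum>w\<in>U (l+1). orth_proj (U (l+1)) (core_colspace U obs l) (m (ext_test (fst x) (snd x) u) (Suc l)) w * v w)"
        using True m' by (simp add: apply_M_def)
      also have "\<dots> = (\<Sum>w\<in>U (l+1). m (ext_test (fst x) (snd x) u) (Suc l) w * v w)"
        by (rule proj_sum[OF Uf vS])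
      also have "\<dots> = hist_obs_prob obs \<sigma> * (\<Sum>w\<in>U (Suc l). m (ext_test (fst x) (snd x) u) (Suc l) w * test_prob obs \<sigma> w)"
        unfolding v_def pred_state_def using ls
        by (simp add: sum_distrib_left mult_ac)
      also have "\<dots> = hist_obs_prob obs \<sigma> * test_prob obs \<sigma> (ext_test (fst x) (snd x) u)"
        using eq by simp
      also have "\<dots> = hist_obs_prob obs (\<sigma> @ [x]) * test_prob obs (\<sigma> @ [x]) u"
        using ext_lemma[OF vp, of \<sigma> "fst x" "snd x" u] ls lH by simp
      also have "\<dots> = hist_obs_prob obs (\<sigma> @ [x]) * pred_state U obs (\<sigma> @ [x]) u"
        using True ls by (simp add: pred_state_def)
      finally show ?thesis .
    qed
    then have A: "apply_M U m' (fst x) (snd x) (Suc l) v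
        = (\<lambda>u. hist_obs_prob obs (\<sigma> @ [x]) * pred_state U obs (\<sigma> @ [x]) u)" by (rule ext)
    show ?case unfolding prop_state.simps IH tS x_def[symmetric] using A by simp
  qed
  define \<sigma> where "\<sigma> = take (H - 1) \<tau>"
  define ob where "ob = fst (\<tau> ! (H - 1))"
  have ls: "length \<sigma> = H - 1" using len H by (simp add: \<sigma>_def)
  have tt: "\<tau> = \<sigma> @ [\<tau> ! (H - 1)]" unfolding \<sigma>_def using len H
    using take_Suc_conv_app_nth[of "H - 1" \<tau>] len H by simp
  have "prop_state U m' (q0 U obs) \<tau> (H - 1) ([ob], []) = hist_obs_prob obs \<sigma> * test_prob obs \<sigma> ([ob], [])"
  proof -
    have c: "prop_state U m' (q0 U obs) \<tau> (H - 1) = (\<lambda>u. hist_obs_prob obs \<sigma> * pred_state U obs \<sigma> u)"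
      using claim[of "H - 1"] by (simp add: \<sigma>_def)
    have "length \<sigma> + 1 = H" using ls H by simp
    then show ?thesis unfolding c using obsU by (simp add: pred_state_def)
  qed
  also have "\<dots> = hist_obs_prob obs \<sigma> * obs \<sigma> ob"
  proof (cases "reachable obs \<sigma>")
    case True then show ?thesis by (simp add: test_prob_def)
  next
    case False
    then have "hist_obs_prob obs \<sigma> = 0" using hist_nonneg[OF vp, of \<sigma>] ls
      by (simp add: reachable_def)
    then show ?thesis by simp
  qed
  also have "\<dots> = hist_obs_prob obs \<tau>"
    using arg_cong[where f="hist_obs_prob obs", OF tt] by (simp add: hist_append ob_def)
  finally have "prop_state U m' (q0 U obs) \<tau> (H - 1) ([ob], []) = hist_obs_prob obs \<tau>" .
  then show ?thesis
    unfolding param_traj_prob_def traj_prob_def hist_obs_prob_def policy_prob_def ob_def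
    by (simp add: prod.distrib)
qed

end
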